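(* Let $(V_1, V_2)$ be an isometric pair such that $\dim E_1 < \infty$ and $[V_2^*, V_1]$ has finite rank. Then $C(V_1, V_2)$ has finite rank.
   Context: All Hilbert spaces are complex and separable. An isometric pair is a pair $(V_1,V_2)$ of commuting isometries. $[V_2^*,V_1] := V_2^*V_1 - V_1V_2^*$. $C(V_1,V_2) := I - V_1V_1^* - V_2V_2^* + V_1V_2V_1^*V_2^*$ and $E_1 := \ker(C(V_1,V_2)-I)$. *)

theory Defs
  imports "HOL-Analysis.Analysis"
begin

class complex_hilbert = banach +
  fixes scaleC :: "complex \<Rightarrow> 'a \<Rightarrow> 'a" (infixr \<open>*\<^sub>C\<close> 75)
    and cinner :: "'a \<Rightarrow> 'a \<Rightarrow> complex"
  assumes scaleC_add_right: "a *\<^sub>C (x + y) = a *\<^sub>C x + a *\<^sub>C y"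
    and scaleC_add_left: "(a + b) *\<^sub>C x = a *\<^sub>C x + b *\<^sub>C x"
    and scaleC_scaleC: "a *\<^sub>C (b *\<^sub>C x) = (a * b) *\<^sub>C x"
    and scaleC_one: "1 *\<^sub>C x = x"
    and scaleR_scaleC: "scaleR r x = complex_of_real r *\<^sub>C x"
    and cinner_conj: "cinner x y = cnj (cinner y x)"
    and cinner_add_right: "cinner x (y + z) = cinner x y + cinner x z"
    and cinner_scaleC_right: "cinner x (a *\<^sub>C y) = a * cinner x y"
    and cinner_self: "cinner x x = complex_of_real ((norm x)\<^sup>2)"

definition separable_space :: "'a::complex_hilbert itself \<Rightarrow> bool" where
  "separable_space _ \<longleftrightarrow> (\<exists>D::'a set. countable D \<and> closure D = UNIV)"

definition clinear_op :: "('a::complex_hilbert \<Rightarrow> 'a) \<Rightarrow> bool" where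
  "clinear_op T \<longleftrightarrow> (\<forall>x y. T (x + y) = T x + T y) \<and> (\<forall>a x. T (a *\<^sub>C x) = a *\<^sub>C T x)"

definition bounded_op :: "('a::complex_hilbert \<Rightarrow> 'a) \<Rightarrow> bool" where
  "bounded_op T \<longleftrightarrow> clinear_op T \<and> (\<exists>K. \<forall>x. norm (T x) \<le> K * norm x)"

definition isometry :: "('a::complex_hilbert \<Rightarrow> 'a) \<Rightarrow> bool" where
  "isometry V \<longleftrightarrow> clinear_op V \<and> (\<forall>x. norm (V x) = norm x)"

definition is_adjoint :: "('a::complex_hilbert \<Rightarrow> 'a) \<Rightarrow> ('a \<Rightarrow> 'a) \<Rightarrow> bool" where
  "is_adjoint T S \<longleftrightarrow> (\<forall>x y. cinner (T x) y = cinner x (S y))"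

definition finite_dim :: "'a::complex_hilbert set \<Rightarrow> bool" where
  "finite_dim A \<longleftrightarrow> (\<exists>F. finite F \<and> (\<forall>v\<in>A. \<exists>c. v = (\<Sum>f\<in>F. c f *\<^sub>C f)))"

definition finite_rank :: "('a::complex_hilbert \<Rightarrow> 'a) \<Rightarrow> bool" where
  "finite_rank T \<longleftrightarrow> finite_dim (range T)"

definition isometric_pair :: "('a::complex_hilbert \<Rightarrow> 'a) \<Rightarrow> ('a \<Rightarrow> 'a) \<Rightarrow> bool" where
  "isometric_pair V1 V2 \<longleftrightarrow> isometry V1 \<and> isometry V2 \<and> V1 \<circ> V2 = V2 \<circ> V1"

definition defect_op :: "('a::complex_hilbert \<Rightarrow> 'a) \<Rightarrow> ('a \<Rightarrow> 'a) \<Rightarrow> ('a \<Rightarrow> 'a) \<Rightarrow> ('a \<Rightarrow> 'a) \<Rightarrow> 'a \<Rightarrow> 'a" where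
  "defect_op V1 V2 V1s V2s = (\<lambda>x. x - V1 (V1s x) - V2 (V2s x) + V1 (V2 (V1s (V2s x))))"

definition cross_comm :: "('a::complex_hilbert \<Rightarrow> 'a) \<Rightarrow> ('a \<Rightarrow> 'a) \<Rightarrow> 'a \<Rightarrow> 'a" where
  "cross_comm V2s V1 = (\<lambda>x. V2s (V1 x) - V1 (V2s x))"

end

theory Submission imports Defs begin

global_interpretation cv: vector_space "scaleC :: complex \<Rightarrow> 'a \<Rightarrow> 'a::complex_hilbert"
  by unfold_locales (simp_all add: scaleC_add_right scaleC_add_left scaleC_scaleC scaleC_one)

lemma cinner_add_left: "cinner (x + y) z = cinner x z + cinner y z"
  by (metis cinner_conj cinner_add_right complex_cnj_add)

lemma cinner_scaleC_left: "cinner (a *\<^sub>C x) y = cnj a * cinner x y"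
  by (metis cinner_conj cinner_scaleC_right complex_cnj_mult complex_cnj_cnj)

lemma cinner_zero_right[simp]: "cinner x 0 = 0"
  using cinner_add_right[of x 0 0] by simp

lemma cinner_zero_left[simp]: "cinner 0 x = 0"
  using cinner_add_left[of 0 0 x] by simp

lemma cinner_diff_right: "cinner x (y - z) = cinner x y - cinner x z"
  using cinner_add_right[of x "y - z" z] by simp

lemma cinner_diff_left: "cinner (y - z) x = cinner y x - cinner z x"
  using cinner_add_left[of "y - z" z x] by simp

lemma cinner_self_zero: "cinner x x = 0 \<longleftrightarrow> x = 0"
  by (simp add: cinner_self)

lemma cinner_ext: "(\<And>z. cinner z u = cinner z v) \<Longrightarrow> u = v"
  by (metis cinner_diff_right cinner_self_zero diff_self eq_iff_diff_eq_0)

lemma scaleC_diff_right: "a *\<^sub>C (x - y) = a *\<^sub>C x - a *\<^sub>C y"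
  by (rule cv.scale_right_diff_distrib)

lemma scaleC_zero[simp]: "a *\<^sub>C 0 = 0"
  by (rule cv.scale_zero_right)


lemma lin_add: "clinear_op f \<Longrightarrow> f (x + y) = f x + f y"
  unfolding clinear_op_def by blast

lemma lin_scale: "clinear_op f \<Longrightarrow> f (a *\<^sub>C x) = a *\<^sub>C f x"
  unfolding clinear_op_def by blast

lemma lin_0: assumes "clinear_op f" shows "f 0 = 0"
proof -
  have "f 0 = f 0 + f 0" using lin_add[OF assms, of 0 0] by simp
  then show ?thesis by simp
qed

lemma lin_diff: assumes "clinear_op f" shows "f (x - y) = f x - f y"
proof -
  have "f x = f (x - y) + f y" using lin_add[OF assms, of "x - y" y] by simp
  then show ?thesis by (simp add: eq_diff_eq)
qed

lemma lin_span: assumes "clinear_op f" "x \<in> cv.span S" shows "f x \<in> cv.span (f ` S)"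
  using assms(2)
proof (induction rule: cv.span_induct_alt)
  case base then show ?case using lin_0[OF assms(1)] cv.span_zero by simp
next
  case (step c x y)
  then show ?case using assms(1)
    by (simp add: lin_add lin_scale cv.span_add cv.span_scale cv.span_base)
qed


lemma finite_dim_iff: "finite_dim A \<longleftrightarrow> (\<exists>F. finite F \<and> A \<subseteq> cv.span F)"
  unfolding finite_dim_def
proof
  assume "\<exists>F. finite F \<and> (\<forall>v\<in>A. \<exists>c. v = (\<Sum>f\<in>F. c f *\<^sub>C f))"
  then obtain F where F: "finite F" "\<forall>v\<in>A. \<exists>c. v = (\<Sum>f\<in>F. c f *\<^sub>C f)" by blast
  have "A \<subseteq> cv.span F"
  proof
    fix v assume "v \<in> A"
    then obtain c where "v = (\<Sum>f\<in>F. c f *\<^sub>C f)" using F(2) by blast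
    then show "v \<in> cv.span F" unfolding cv.span_finite[OF F(1)] by blast
  qed
  then show "\<exists>F. finite F \<and> A \<subseteq> cv.span F" using F(1) by blast
next
  assume "\<exists>F. finite F \<and> A \<subseteq> cv.span F"
  then obtain F where "finite F" "A \<subseteq> cv.span F" by blast
  then show "\<exists>F. finite F \<and> (\<forall>v\<in>A. \<exists>c. v = (\<Sum>f\<in>F. c f *\<^sub>C f))" using cv.span_finite[of F] by auto
qed

lemma iso_lin: "isometry V \<Longrightarrow> clinear_op V"
  unfolding isometry_def by blast

lemma iso_self: "isometry V \<Longrightarrow> cinner (V x) (V x) = cinner x x"
  unfolding isometry_def by (simp add: cinner_self)

lemma iso_inner: assumes "isometry V" shows "cinner (V x) (V y) = cinner x y"
proof -
  have l: "clinear_op V" using assms unfolding isometry_def by blast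
  have e: "cinner (V x) (V y) + cinner (V y) (V x) = cinner x y + cinner y x" for x y
  proof -
    have "cinner (V (x+y)) (V (x+y)) = cinner (x+y) (x+y)" by (rule iso_self[OF assms])
    then have "cinner (V x) (V x) + cinner (V y) (V x) + (cinner (V x) (V y) + cinner (V y) (V y))
       = cinner x x + cinner y x + (cinner x y + cinner y y)"
      by (simp only: lin_add[OF l] cinner_add_left cinner_add_right)
    then show ?thesis using iso_self[OF assms, of x] iso_self[OF assms, of y]
      by (simp add: ac_simps)
  qed
  have "cinner (V x) (V (\<i> *\<^sub>C y)) + cinner (V (\<i> *\<^sub>C y)) (V x) = cinner x (\<i> *\<^sub>C y) + cinner (\<i> *\<^sub>C y) x"
    by (rule e)
  then have f: "\<i> * cinner (V x) (V y) + (- \<i>) * cinner (V y) (V x) = \<i> * cinner x y + (- \<i>) * cinner y x"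
    by (simp only: lin_scale[OF l] cinner_scaleC_left cinner_scaleC_right complex_cnj_i)
  have g: "cinner (V y) (V x) = cinner x y + cinner y x - cinner (V x) (V y)" using e[of x y]
    by (simp add: eq_diff_eq add.commute)
  have "\<i> * (2 * cinner (V x) (V y)) = \<i> * (2 * cinner x y)" using f unfolding g
    by (simp add: algebra_simps)
  then show ?thesis by simp
qed

lemma adj_lin: assumes "is_adjoint T S" shows "clinear_op S"
  unfolding clinear_op_def
proof (intro conjI allI)
  fix x y show "S (x + y) = S x + S y"
    by (rule cinner_ext) (metis assms is_adjoint_def cinner_add_right)
next
  fix a x show "S (a *\<^sub>C x) = a *\<^sub>C S x"
    by (rule cinner_ext) (metis assms is_adjoint_def cinner_scaleC_right)
qed

lemma iso_adj_inv: assumes "isometry V" "is_adjoint V S" shows "S (V x) = x"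
  by (rule cinner_ext) (metis assms is_adjoint_def iso_inner)

lemma orth_span: assumes "\<forall>g\<in>G. cinner g w = 0" "v \<in> cv.span G" shows "cinner v w = 0"
  using assms(2)
proof (induction rule: cv.span_induct_alt)
  case base then show ?case by simp
next
  case (step c x y) then show ?case using assms(1) by (simp add: cinner_add_left cinner_scaleC_left)
qed

lemma proj_exists: "finite G \<Longrightarrow> \<forall>y. \<exists>m \<in> cv.span G. \<forall>g\<in>G. cinner g (y - m) = 0"
proof (induction G rule: finite_induct)
  case empty then show ?case using cv.span_zero by blast
next
  case (insert g G)
  show ?case
  proof
    fix y
    obtain m where m: "m \<in> cv.span G" "\<forall>h\<in>G. cinner h (y - m) = 0" using insert.IH by blast
    obtain mg where mg: "mg \<in> cv.span G" "\<forall>h\<in>G. cinner h (g - mg) = 0" using insert.IH by blast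
    have sub: "cv.span G \<subseteq> cv.span (insert g G)" by (rule cv.span_mono) blast
    show "\<exists>m \<in> cv.span (insert g G). \<forall>h\<in>insert g G. cinner h (y - m) = 0"
    proof (cases "g - mg = 0")
      case True
      then have "g = mg" by simp
      then have "cinner g (y - m) = 0" using orth_span[OF m(2) mg(1)] by simp
      then show ?thesis using m sub by blast
    next
      case False
      define g' where "g' = g - mg"
      define c where "c = cinner g' (y - m) / cinner g' g'"
      have nz: "cinner g' g' \<noteq> 0" using False cinner_self_zero g'_def by blast
      define m' where "m' = m + c *\<^sub>C g'"
      have "g' \<in> cv.span (insert g G)" unfolding g'_def
        using sub mg(1) by (meson cv.span_diff cv.span_base insertI1 subsetD)
      then have m'in: "m' \<in> cv.span (insert g G)" unfolding m'_def
        using m(1) sub by (meson cv.span_add cv.span_scale subsetD)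
      have oG: "\<forall>h\<in>G. cinner h (y - m') = 0"
      proof
        fix h assume "h \<in> G"
        then have "cinner h (y - m) = 0" "cinner h g' = 0" using m(2) mg(2) g'_def by auto
        then show "cinner h (y - m') = 0"
          by (simp add: m'_def cinner_diff_right cinner_add_right cinner_scaleC_right)
      qed
      have cc: "c * cinner g' g' = cinner g' (y - m)" using nz c_def by simp
      have "cinner g' (y - m') = 0"
        using cc by (simp add: m'_def cinner_diff_right cinner_add_right cinner_scaleC_right)
      moreover have "cinner mg (y - m') = 0" using orth_span[OF oG mg(1)] .
      ultimately have "cinner g (y - m') = 0" unfolding g'_def by (simp add: cinner_diff_left)
      then show ?thesis using oG m'in by blast
    qed
  qed
qed

lemma adj_fin: assumes "is_adjoint X Xs" "finite_rank X" shows "finite_rank Xs"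
proof -
  have l: "clinear_op Xs" using adj_lin[OF assms(1)] .
  obtain G where G: "finite G" "range X \<subseteq> cv.span G" using assms(2) finite_rank_def finite_dim_iff by metis
  have "Xs y \<in> cv.span (Xs ` G)" for y
  proof -
    obtain m where m: "m \<in> cv.span G" "\<forall>g\<in>G. cinner g (y - m) = 0" using proj_exists[OF G(1)] by blast
    have "cinner (X x) (y - m) = 0" for x using orth_span[OF m(2)] G(2) by blast
    then have "cinner x (Xs (y - m)) = 0" for x using assms(1) is_adjoint_def by metis
    then have "Xs (y - m) = 0" using cinner_ext[of 0 "Xs (y - m)"] by (metis cinner_zero_right)
    then have "Xs y = Xs m" by (simp add: lin_diff[OF l])
    then show ?thesis using lin_span[OF l m(1)] by simp
  qed
  then show ?thesis unfolding finite_rank_def finite_dim_iff using G(1) by blast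
qed


lemma adj_sym: assumes "is_adjoint T S" shows "cinner (S x) y = cinner x (T y)"
  by (metis assms cinner_conj is_adjoint_def)

lemma lin_comp: "clinear_op f \<Longrightarrow> clinear_op g \<Longrightarrow> clinear_op (\<lambda>x. f (g x))"
  unfolding clinear_op_def by simp

lemma lin_minus: "clinear_op f \<Longrightarrow> clinear_op g \<Longrightarrow> clinear_op (\<lambda>x. f x - g x)"
  unfolding clinear_op_def by (simp add: algebra_simps scaleC_diff_right)

lemma lin_plus: "clinear_op f \<Longrightarrow> clinear_op g \<Longrightarrow> clinear_op (\<lambda>x. f x + g x)"
  unfolding clinear_op_def by (simp add: algebra_simps scaleC_add_right)

lemma lin_id: "clinear_op (\<lambda>x. x)"
  unfolding clinear_op_def by simp

lemma lin_span_rev: assumes "clinear_op f" "y \<in> cv.span (f ` S)" shows "\<exists>z \<in> cv.span S. f z = y"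
  using assms(2)
proof (induction rule: cv.span_induct_alt)
  case base then show ?case using lin_0[OF assms(1)] cv.span_zero by blast
next
  case (step c x y)
  then obtain s z where s: "s \<in> S" "x = f s" and z: "z \<in> cv.span S" "f z = y" by blast
  have "c *\<^sub>C s + z \<in> cv.span S" using s z by (simp add: cv.span_add cv.span_scale cv.span_base)
  moreover have "f (c *\<^sub>C s + z) = c *\<^sub>C x + y" using s z assms(1) by (simp add: lin_add lin_scale)
  ultimately show ?case by blast
qed

theorem corollary3p7:
  fixes V1 V2 V1s V2s :: "'a::complex_hilbert \<Rightarrow> 'a"
  assumes "separable_space TYPE('a)"
    and "isometric_pair V1 V2"
    and "is_adjoint V1 V1s" and "is_adjoint V2 V2s"
    and "finite_dim {x. defect_op V1 V2 V1s V2s x = x}"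
    and "finite_rank (cross_comm V2s V1)"
  shows "finite_rank (defect_op V1 V2 V1s V2s)"
proof -
  have iso1: "isometry V1" and iso2: "isometry V2" and comm: "V1 \<circ> V2 = V2 \<circ> V1"
    using assms(2) unfolding isometric_pair_def by auto
  have la: "clinear_op V1" and lb: "clinear_op V2" using iso1 iso2 iso_lin by auto
  have lA: "clinear_op V1s" and lB: "clinear_op V2s" using assms(3,4) adj_lin by auto
  have Aa: "V1s (V1 x) = x" for x using iso_adj_inv[OF iso1 assms(3)] .
  have Bb: "V2s (V2 x) = x" for x using iso_adj_inv[OF iso2 assms(4)] .
  have ab: "V1 (V2 x) = V2 (V1 x)" for x using fun_cong[OF comm, of x] by (simp only: comp_apply)
  have a3: "cinner (V1 x) y = cinner x (V1s y)" for x y using assms(3) unfolding is_adjoint_def by blast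
  have a4: "cinner (V2 x) y = cinner x (V2s y)" for x y using assms(4) unfolding is_adjoint_def by blast
  have AB: "V1s (V2s x) = V2s (V1s x)" for x
  proof (rule cinner_ext)
    fix z
    have "cinner z (V1s (V2s x)) = cinner (V1 z) (V2s x)" by (rule a3[symmetric])
    also have "\<dots> = cinner (V2 (V1 z)) x" by (rule a4[symmetric])
    also have "\<dots> = cinner (V1 (V2 z)) x" by (simp only: ab)
    also have "\<dots> = cinner (V2 z) (V1s x)" by (rule a3)
    also have "\<dots> = cinner z (V2s (V1s x))" by (rule a4)
    finally show "cinner z (V1s (V2s x)) = cinner z (V2s (V1s x))" .
  qed
  have Aba: "V1s (V2 (V1 x)) = V2 x" for x by (simp only: ab[symmetric] Aa)
  have BAb: "V2s (V1s (V2 x)) = V1s x" for x by (simp only: AB[symmetric] Bb)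
  define Ds where "Ds = (\<lambda>x. V1s (V2 x) - V2 (V1s x))"
  define D where "D = cross_comm V2s V1"
  define Q where "Q = (\<lambda>x. x - V1 (V1s x))"
  define C where "C = defect_op V1 V2 V1s V2s"
  define K where "K = (\<lambda>x. C (C x) - C x)"
  have adjD: "is_adjoint D Ds"
    unfolding is_adjoint_def D_def Ds_def cross_comm_def
    by (simp add: cinner_diff_left cinner_diff_right adj_sym[OF assms(3)] adj_sym[OF assms(4)]
        assms(3,4)[unfolded is_adjoint_def])
  have finD: "finite_rank D" using assms(6) D_def by simp
  have finDs: "finite_rank Ds" using adj_fin[OF adjD finD] .
  have lQ: "clinear_op Q" unfolding Q_def by (rule lin_minus[OF lin_id lin_comp[OF la lA]])
  have lC: "clinear_op C" unfolding C_def defect_op_def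
    by (rule lin_plus[OF lin_minus[OF lin_minus[OF lin_id lin_comp[OF la lA]] lin_comp[OF lb lB]]
        lin_comp[OF la lin_comp[OF lb lin_comp[OF lA lB]]]])
  have lK: "clinear_op K" unfolding K_def by (rule lin_minus[OF lin_comp[OF lC lC] lC])
  have ident: "K x = V1 (Ds (Q (V2s x))) + V2 (Q (D (V1s x)))" for x
    unfolding K_def C_def defect_op_def Ds_def Q_def D_def cross_comm_def
    by (simp add: lin_add[OF la] lin_add[OF lA] lin_add[OF lb] lin_add[OF lB]
        lin_diff[OF la] lin_diff[OF lA] lin_diff[OF lb] lin_diff[OF lB]
        Aa Bb ab AB Aba BAb algebra_simps)
      (simp add: lin_0[OF la] lin_0[OF lb])
  obtain G1 where G1: "finite G1" "range Ds \<subseteq> cv.span G1" using finDs unfolding finite_rank_def finite_dim_iff by blast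
  obtain G2 where G2: "finite G2" "range D \<subseteq> cv.span G2" using finD unfolding finite_rank_def finite_dim_iff by blast
  define R where "R = V1 ` G1 \<union> V2 ` Q ` G2"
  have finR: "finite R" using G1 G2 R_def by simp
  have KR: "range K \<subseteq> cv.span R"
  proof
    fix y assume "y \<in> range K"
    then obtain x where x: "y = K x" by blast
    have "Ds (Q (V2s x)) \<in> cv.span G1" using G1(2) by blast
    then have "V1 (Ds (Q (V2s x))) \<in> cv.span (V1 ` G1)" by (rule lin_span[OF la])
    then have 1: "V1 (Ds (Q (V2s x))) \<in> cv.span R" using cv.span_mono[of "V1 ` G1" R] R_def by blast
    have "D (V1s x) \<in> cv.span G2" using G2(2) by blast
    then have "Q (D (V1s x)) \<in> cv.span (Q ` G2)" by (rule lin_span[OF lQ])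
    then have "V2 (Q (D (V1s x))) \<in> cv.span (V2 ` Q ` G2)" by (rule lin_span[OF lb])
    then have 2: "V2 (Q (D (V1s x))) \<in> cv.span R" using cv.span_mono[of "V2 ` Q ` G2" R] R_def by blast
    show "y \<in> cv.span R" unfolding x ident by (rule cv.span_add[OF 1 2])
  qed
  have "finite_dim {x. C x = x}" using assms(5) C_def by simp
  then obtain E where E: "finite E" "{x. C x = x} \<subseteq> cv.span E"
    unfolding finite_dim_iff by blast
  obtain B where B: "B \<subseteq> range K" "cv.independent B" "range K \<subseteq> cv.span B"
    "card B = cv.dim (range K)"
    by (rule cv.basis_exists)
  have "B \<subseteq> cv.span R" using B(1) KR by (rule order_trans)
  from cv.independent_span_bound[OF finR B(2) this] have finB: "finite B" by simp
  have "\<forall>b\<in>B. \<exists>x. K x = b" using B(1) by blast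
  from bchoice[OF this] obtain xf where xf: "\<forall>b\<in>B. K (xf b) = b" by (elim exE)
  have "K ` xf ` B = (\<lambda>b. b) ` B" unfolding image_image using xf by (intro image_cong) auto
  then have KB: "K ` xf ` B = B" by simp
  define F where "F = E \<union> C ` xf ` B"
  have finF: "finite F" using E(1) finB F_def by simp
  have "C x \<in> cv.span F" for x
  proof -
    have "K x \<in> cv.span (K ` xf ` B)" unfolding KB using B(3) by blast
    then obtain z where z: "z \<in> cv.span (xf ` B)" "K z = K x" using lin_span_rev[OF lK] by blast
    have "K (x - z) = 0" using z(2) lin_diff[OF lK] by simp
    then have "C (C (x - z)) = C (x - z)" unfolding K_def by simp
    then have "C (x - z) \<in> cv.span E" using E(2) by blast
    then have 1: "C (x - z) \<in> cv.span F" using cv.span_mono[of E F] F_def by blast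
    have "C z \<in> cv.span (C ` xf ` B)" using lin_span[OF lC z(1)] .
    then have 2: "C z \<in> cv.span F" using cv.span_mono[of "C ` xf ` B" F] F_def by blast
    have eq: "C x = C (x - z) + C z" using lin_diff[OF lC] by simp
    show ?thesis by (subst eq) (rule cv.span_add[OF 1 2])
  qed
  then have "range C \<subseteq> cv.span F" by blast
  then have "finite_dim (range C)" unfolding finite_dim_iff using finF by blast
  then show ?thesis unfolding finite_rank_def C_def by simp
qed

end
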